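(* Consider the following over-the-air federated learning setting. There are $N$ devices indexed by $\mathcal{N}=\{1,\dots,N\}$, each device $n$ having a local objective $L_n:\mathbb{R}^d\to\mathbb{R}$, and the global objective is $L(\boldsymbol m)=\frac1N\sum_{n=1}^N L_n(\boldsymbol m)$. Let $\boldsymbol m^*$ be a global minimizer of $L$ and $\boldsymbol m_n^*=[m^*_{n,1},\dots,m^*_{n,d}]$ a minimizer of $L_n$; write $\boldsymbol m^*=[m_1^*,\dots,m_d^*]$ and $$\Gamma=\max_n\Big\{\frac{\theta d}{2}\big(\max_i |m_i^*-m_{n,i}^*|\big)^2\Big\}.$$ In round $t$ the server holds $\boldsymbol m^t$; a nonempty uploader set $\mathcal K^t\subseteq\mathcal N$ and a jammer set $\mathcal J^t\subseteq\mathcal N\setminus\mathcal K^t$ are chosen. Each uploader sets $\boldsymbol m_n^t=\boldsymbol m^t$ and computes a stochastic (mini-batch) gradient $\boldsymbol g_n^t$ of $L_n$ at $\boldsymbol m_n^t$. Let $p_{n,B}^t=h_{n,B}^t\sqrt{P_n}>0$, where $h_{n,B}^t>0$ is the channel gain from device $n$ to the server and $P_n>0$ its power budget. The server update is $$\boldsymbol m^{t+1}=\boldsymbol m^t-\tau^t\Big(\hat{\boldsymbol g}^t+\frac{G}{\sum_{n\in\mathcal K^t}p_{n,B}^t}\boldsymbol r_{B,Tot}^t\Big),\qquad \hat{\boldsymbol g}^t=\sum_{n\in\mathcal K^t}\frac{p_{n,B}^t}{\sum_{k\in\mathcal K^t}p_{k,B}^t}\boldsymbol g_n^t,$$ where $\boldsymbol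 r_{B,Tot}^t=\sum_{n\in\mathcal J^t}\frac{p_{n,B}^t}{\sqrt d}\boldsymbol e_n^t+\boldsymbol r_B^t$, with $\boldsymbol e_n^t\sim\mathcal N(0,\mathbf I_d)$ and $\boldsymbol r_B^t\sim\mathcal N(0,\sigma_B\mathbf I_d)$ mutually independent and independent of the gradients. Assume: (A1) $\mathbb E[\boldsymbol g_n^t]=\nabla L_n(\boldsymbol m_n^t)$, $\mathbb E\|\boldsymbol g_n^t-\nabla L_n(\boldsymbol m_n^t)\|_2^2\le\vartheta^2$, $\mathbb E\|\boldsymbol g_n^t\|_2\le G$; (A2) each $L_n$ is $\theta$-smooth: $L_n(\boldsymbol\iota')-L_n(\boldsymbol\iota)\le(\boldsymbol\iota'-\boldsymbol\iota)^{\mathrm T}\nabla L_n(\boldsymbol\iota)+\frac\theta2\|\boldsymbol\iota'-\boldsymbol\iota\|_2^2$ for all $\boldsymbol\iota,\boldsymbol\iota'$; (A3) each $L_n$ is $\rho$-strongly convex: $L_n(\boldsymbol\iota')-L_n(\boldsymbol\iota)\ge(\boldsymbol\iota'-\boldsymbol\iota)^{\mathrm T}\nabla L_n(\boldsymbol\iota)+\frac\rho2\|\boldsymbol\iota'-\boldsymbol\iota\|_2^2$ for all $\boldsymbol\iota,\boldsymbol\iota'$. Let $\varrho$ be a constant with $\frac1\varrho\le\tau^t\le\frac1\theta$. Then $$\mathbb E\big[\|\boldsymbol m^{t+1}-\boldsymbol m^*\|_2^2\big]\le(1-\rho\tau^t)\,\mathbb E\big[\|\boldsymbol m^t-\boldsymbol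 m^*\|_2^2\big]+(\tau^t)^2\big(2\varrho\Gamma+\vartheta^2+G^2\Psi^t\big),$$ where $$\Psi^t=\frac{N\sum_{n\in\mathcal J^t}(p_{n,B}^t)^2+d\sigma_B}{\big(\sum_{n\in\mathcal K^t}p_{n,B}^t\big)^2}.$$ The expectation is with respect to the stochastic gradients and the Gaussian noise.
   Context: $G>0$ is a constant which, as a standing assumption of the paper, upper bounds $\|\boldsymbol g_n^t\|_2$. $\sigma_B$ denotes the variance (per coordinate) of the receiver noise at the server. The jamming vectors $\boldsymbol e_n^t$ are artificial Gaussian noise sent by jammer devices; uploaders transmit $\frac{\sqrt{P_n}}{G}\boldsymbol g_n^t$ and the server post-processes the superimposed received signal by multiplying by $G/\sum_{n\in\mathcal K^t}p^t_{n,B}$, which yields the stated update. *)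

theory Defs
  imports "HOL-Probability.Probability"
begin

definition Gamma_het :: "nat \<Rightarrow> real \<Rightarrow> real^'d \<Rightarrow> (nat \<Rightarrow> real^'d) \<Rightarrow> real" where
  "Gamma_het N \<theta> mstar mloc =
     Max ((\<lambda>n. \<theta> * real CARD('d) / 2 *
              (Max ((\<lambda>i. \<bar>mstar $ i - mloc n $ i\<bar>) ` (UNIV :: 'd set)))\<^sup>2) ` {1..N})"

definition Psi :: "nat \<Rightarrow> nat \<Rightarrow> real \<Rightarrow> nat set \<Rightarrow> nat set \<Rightarrow> (nat \<Rightarrow> real) \<Rightarrow> real" where
  "Psi N d \<sigma>B J K p = (real N * (\<Sum>n\<in>J. (p n)\<^sup>2) + real d * \<sigma>B) / (\<Sum>n\<in>K. p n)\<^sup>2"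

text \<open>Scalar noise family: (Some n, i) is coordinate i of the jamming vector e_n,
  (None, i) is coordinate i of the receiver noise r_B.\<close>
definition noise_fam :: "(nat \<Rightarrow> 'a \<Rightarrow> real^'d) \<Rightarrow> ('a \<Rightarrow> real^'d) \<Rightarrow> nat option \<times> 'd \<Rightarrow> 'a \<Rightarrow> real" where
  "noise_fam e r k \<omega> = (case fst k of Some n \<Rightarrow> e n \<omega> $ snd k | None \<Rightarrow> r \<omega> $ snd k)"

end

theory Submission
  imports Defs
begin

lemma vec_nth_meas[measurable (raw)]:
  "f \<in> borel_measurable M \<Longrightarrow> (\<lambda>\<omega>. (f \<omega> :: real^'d) $ i) \<in> borel_measurable M"
proof -
  assume f: "f \<in> borel_measurable M"
  have "(\<lambda>x. (x :: real^'d) $ i) \<in> borel_measurable borel"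
    by (intro borel_measurable_continuous_onI linear_continuous_on bounded_linear_vec_nth)
  from measurable_compose[OF f this] show ?thesis by simp
qed
lemma vec_lambda_meas:
  "(\<And>i. f i \<in> borel_measurable M) \<Longrightarrow> (\<lambda>\<omega>. (\<chi> i. f i \<omega>) :: real^'d) \<in> borel_measurable M"
  unfolding borel_measurable_euclidean_space[where 'c="real^'d"]
  by (auto simp: Basis_vec_def inner_axis)


lemma grad_sq_bound:
  fixes L :: "real^'d \<Rightarrow> real" and gr :: "real^'d \<Rightarrow> real^'d"
  assumes th: "\<theta> > 0"
    and smooth: "\<And>x y. L y - L x \<le> (y - x) \<bullet> gr x + \<theta> / 2 * (norm (y - x))\<^sup>2"
    and mn: "\<And>x. L xm \<le> L x"
  shows "(norm (gr y))\<^sup>2 \<le> 2 * \<theta> * (L y - L xm)"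
proof -
  define z where "z = y - (1/\<theta>) *\<^sub>R gr y"
  have "L z - L y \<le> (z - y) \<bullet> gr y + \<theta> / 2 * (norm (z - y))\<^sup>2" by (rule smooth)
  also have "(z - y) \<bullet> gr y = - (1/\<theta>) * (norm (gr y))\<^sup>2"
    by (simp add: z_def power2_norm_eq_inner)
  also have "(norm (z - y))\<^sup>2 = (1/\<theta>)\<^sup>2 * (norm (gr y))\<^sup>2"
    using th by (simp add: z_def power_divide)
  finally have "L z - L y \<le> - (1/\<theta>) * (norm (gr y))\<^sup>2 + \<theta> / 2 * ((1/\<theta>)\<^sup>2 * (norm (gr y))\<^sup>2)" .
  also have "\<dots> = - (norm (gr y))\<^sup>2 / (2*\<theta>)" using th by (simp add: field_simps power2_eq_square)
  finally have "(norm (gr y))\<^sup>2 / (2*\<theta>) \<le> L y - L xm" using mn[of z] by linarith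
  then show ?thesis using th by (simp add: field_simps)
qed

lemma norm_sq_convex:
  fixes v :: "nat \<Rightarrow> 'a::real_normed_vector"
  assumes "finite K" "K \<noteq> {}" "\<And>n. n \<in> K \<Longrightarrow> w n \<ge> 0" "(\<Sum>n\<in>K. w n) = 1"
  shows "(norm (\<Sum>n\<in>K. w n *\<^sub>R v n))\<^sup>2 \<le> (\<Sum>n\<in>K. w n * (norm (v n))\<^sup>2)"
proof -
  have "norm (\<Sum>n\<in>K. w n *\<^sub>R v n) \<le> (\<Sum>n\<in>K. w n * norm (v n))"
    by (rule order_trans[OF norm_sum]) (simp add: assms(3) sum_mono)
  then have "(norm (\<Sum>n\<in>K. w n *\<^sub>R v n))\<^sup>2 \<le> (\<Sum>n\<in>K. w n * norm (v n))\<^sup>2"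
    by (simp add: power_mono)
  also have "(\<Sum>n\<in>K. w n * norm (v n))\<^sup>2 = power2 (\<Sum>n\<in>K. w n *\<^sub>R norm (v n))" by simp
  also have "\<dots> \<le> (\<Sum>n\<in>K. w n * power2 (norm (v n)))"
    by (rule convex_on_sum[OF assms(1,2) convex_power2 assms(4) assms(3)]) auto
  finally show ?thesis .
qed

lemma norm_sq_le_card_max:
  fixes v :: "real^'d"
  shows "(norm v)\<^sup>2 \<le> real CARD('d) * (Max ((\<lambda>i. \<bar>v $ i\<bar>) ` UNIV))\<^sup>2"
proof -
  have "(norm v)\<^sup>2 = (\<Sum>i\<in>UNIV. (v $ i)\<^sup>2)"
    unfolding power2_norm_eq_inner inner_vec_def by (simp add: power2_eq_square)
  also have "\<dots> \<le> (\<Sum>i\<in>(UNIV::'d set). (Max ((\<lambda>i. \<bar>v $ i\<bar>) ` UNIV))\<^sup>2)"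
  proof (rule sum_mono)
    fix i :: 'd
    have "\<bar>v $ i\<bar> \<le> Max ((\<lambda>i. \<bar>v $ i\<bar>) ` UNIV)" by (rule Max_ge) auto
    then have "\<bar>v $ i\<bar>\<^sup>2 \<le> (Max ((\<lambda>i. \<bar>v $ i\<bar>) ` UNIV))\<^sup>2"
      by (rule power_mono) simp
    then show "(v $ i)\<^sup>2 \<le> (Max ((\<lambda>i. \<bar>v $ i\<bar>) ` UNIV))\<^sup>2" by simp
  qed
  finally show ?thesis by simp
qed

lemma det_main:
  fixes L :: "nat \<Rightarrow> real^'d \<Rightarrow> real" and gr :: "nat \<Rightarrow> real^'d \<Rightarrow> real^'d"
    and mstar x :: "real^'d" and mloc :: "nat \<Rightarrow> real^'d" and w :: "nat \<Rightarrow> real"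
  assumes Kf: "finite K" and Kne: "K \<noteq> {}" and Ksub: "K \<subseteq> {1..N}"
    and w0: "\<And>n. n \<in> K \<Longrightarrow> w n \<ge> 0" and w1: "(\<Sum>n\<in>K. w n) = 1"
    and mloc_min: "\<And>n x. n \<in> {1..N} \<Longrightarrow> L n (mloc n) \<le> L n x"
    and smooth: "\<And>n x y. n \<in> {1..N} \<Longrightarrow>
        L n y - L n x \<le> (y - x) \<bullet> gr n x + \<theta> / 2 * (norm (y - x))\<^sup>2"
    and strconv: "\<And>n x y. n \<in> {1..N} \<Longrightarrow>
        L n y - L n x \<ge> (y - x) \<bullet> gr n x + \<rho> / 2 * (norm (y - x))\<^sup>2"
    and th: "\<theta> > 0" and vr: "vrho > 0" and tlo: "1 / vrho \<le> \<tau>" and thi: "\<tau> \<le> 1 / \<theta>"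
  shows "(norm (x - mstar - \<tau> *\<^sub>R (\<Sum>n\<in>K. w n *\<^sub>R gr n x)))\<^sup>2
         \<le> (1 - \<rho> * \<tau>) * (norm (x - mstar))\<^sup>2 + 2 * \<tau>\<^sup>2 * vrho * Gamma_het N \<theta> mstar mloc"
proof -
  define u where "u = x - mstar"
  define gb where "gb = (\<Sum>n\<in>K. w n *\<^sub>R gr n x)"
  define Gam where "Gam = Gamma_het N \<theta> mstar mloc"
  define a where "a = (\<lambda>n. L n x - L n (mloc n))"
  define b where "b = (\<lambda>n. L n mstar - L n (mloc n))"
  have tpos: "\<tau> > 0" using tlo vr by (meson divide_pos_pos less_le_trans zero_less_one)
  have tth: "\<theta> * \<tau> \<le> 1" using thi th by (simp add: field_simps)
  have tvr: "\<tau> * vrho \<ge> 1" using tlo vr by (simp add: field_simps)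
  have inN: "\<And>n. n \<in> K \<Longrightarrow> n \<in> {1..N}" using Ksub by auto
  have a0: "\<And>n. n \<in> K \<Longrightarrow> a n \<ge> 0" unfolding a_def using mloc_min inN by fastforce
  have gsq: "\<And>n y. n \<in> {1..N} \<Longrightarrow> (norm (gr n y))\<^sup>2 \<le> 2 * \<theta> * (L n y - L n (mloc n))"
  proof -
    fix n y assume n: "n \<in> {1..N}"
    show "(norm (gr n y))\<^sup>2 \<le> 2 * \<theta> * (L n y - L n (mloc n))"
      by (rule grad_sq_bound[OF th smooth[OF n] mloc_min[OF n]])
  qed
  have gz: "\<And>n. n \<in> {1..N} \<Longrightarrow> gr n (mloc n) = 0"
  proof -
    fix n assume n: "n \<in> {1..N}"
    have "(norm (gr n (mloc n)))\<^sup>2 \<le> 0" using gsq[OF n, of "mloc n"] by simp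
    then show "gr n (mloc n) = 0" by simp
  qed
  define trm where "trm = (\<lambda>n. \<theta> * real CARD('d) / 2 *
              (Max ((\<lambda>i. \<bar>mstar $ i - mloc n $ i\<bar>) ` (UNIV :: 'd set)))\<^sup>2)"
  have GamE: "Gam = Max (trm ` {1..N})" unfolding Gam_def Gamma_het_def trm_def by simp
  have trmG: "\<And>n. n \<in> {1..N} \<Longrightarrow> trm n \<le> Gam" unfolding GamE by (rule Max_ge) auto
  have bG: "\<And>n. n \<in> K \<Longrightarrow> b n \<le> Gam"
  proof -
    fix n assume nK: "n \<in> K"
    then have n: "n \<in> {1..N}" by (rule inN)
    have "b n \<le> (mstar - mloc n) \<bullet> gr n (mloc n) + \<theta> / 2 * (norm (mstar - mloc n))\<^sup>2"
      unfolding b_def by (rule smooth[OF n])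
    also have "\<dots> = \<theta> / 2 * (norm (mstar - mloc n))\<^sup>2" using gz[OF n] by simp
    also have "\<dots> \<le> \<theta> / 2 * (real CARD('d) * (Max ((\<lambda>i. \<bar>(mstar - mloc n) $ i\<bar>) ` UNIV))\<^sup>2)"
      using th by (intro mult_left_mono norm_sq_le_card_max) auto
    also have "\<dots> = trm n" unfolding trm_def by simp
    also have "\<dots> \<le> Gam" by (rule trmG[OF n])
    finally show "b n \<le> Gam" .
  qed
  obtain n0 where n0: "n0 \<in> K" using Kne by auto
  have "0 \<le> trm n0" unfolding trm_def using th by simp
  then have Gam0: "0 \<le> Gam" using trmG[OF inN[OF n0]] by linarith
  have e1: "(norm (u - \<tau> *\<^sub>R gb))\<^sup>2 = (norm u)\<^sup>2 - 2 * \<tau> * (u \<bullet> gb) + \<tau>\<^sup>2 * (norm gb)\<^sup>2"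
    unfolding power2_norm_eq_inner by (simp add: inner_diff_left inner_diff_right inner_commute algebra_simps power2_eq_square)
  have e2: "u \<bullet> gb = (\<Sum>n\<in>K. w n * (u \<bullet> gr n x))"
    unfolding gb_def by (simp add: inner_sum_right)
  have e3: "\<And>n. n \<in> K \<Longrightarrow> u \<bullet> gr n x \<ge> a n - b n + \<rho> / 2 * (norm u)\<^sup>2"
  proof -
    fix n assume nK: "n \<in> K"
    have "L n mstar - L n x \<ge> (mstar - x) \<bullet> gr n x + \<rho> / 2 * (norm (mstar - x))\<^sup>2"
      by (rule strconv[OF inN[OF nK]])
    moreover have "(mstar - x) \<bullet> gr n x = - (u \<bullet> gr n x)" unfolding u_def by (simp add: inner_diff_left)
    moreover have "norm (mstar - x) = norm u" unfolding u_def by (rule norm_minus_commute)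
    ultimately show "u \<bullet> gr n x \<ge> a n - b n + \<rho> / 2 * (norm u)\<^sup>2" unfolding a_def b_def by simp
  qed
  have "u \<bullet> gb \<ge> (\<Sum>n\<in>K. w n * (a n - b n + \<rho> / 2 * (norm u)\<^sup>2))"
    unfolding e2 by (intro sum_mono mult_left_mono e3 w0)
  also have "(\<Sum>n\<in>K. w n * (a n - b n + \<rho> / 2 * (norm u)\<^sup>2))
      = (\<Sum>n\<in>K. w n * a n) - (\<Sum>n\<in>K. w n * b n) + \<rho> / 2 * (norm u)\<^sup>2"
  proof -
    have "(\<Sum>n\<in>K. w n * (a n - b n + \<rho> / 2 * (norm u)\<^sup>2))
      = (\<Sum>n\<in>K. w n * a n) - (\<Sum>n\<in>K. w n * b n) + (\<Sum>n\<in>K. w n) * (\<rho> / 2 * (norm u)\<^sup>2)"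
      by (simp add: right_diff_distrib distrib_left sum.distrib sum_subtractf sum_distrib_right)
    then show ?thesis using w1 by simp
  qed
  finally have i1: "u \<bullet> gb \<ge> (\<Sum>n\<in>K. w n * a n) - (\<Sum>n\<in>K. w n * b n) + \<rho> / 2 * (norm u)\<^sup>2" .
  have "(norm gb)\<^sup>2 \<le> (\<Sum>n\<in>K. w n * (norm (gr n x))\<^sup>2)"
    unfolding gb_def by (rule norm_sq_convex[OF Kf Kne w0 w1])
  also have "\<dots> \<le> (\<Sum>n\<in>K. w n * (2 * \<theta> * a n))"
    unfolding a_def by (intro sum_mono mult_left_mono gsq inN w0)
  finally have i2: "(norm gb)\<^sup>2 \<le> 2 * \<theta> * (\<Sum>n\<in>K. w n * a n)"
    by (simp add: sum_distrib_left algebra_simps)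
  have SA0: "(\<Sum>n\<in>K. w n * a n) \<ge> 0" by (intro sum_nonneg mult_nonneg_nonneg w0 a0)
  have SB: "(\<Sum>n\<in>K. w n * b n) \<le> Gam"
  proof -
    have "(\<Sum>n\<in>K. w n * b n) \<le> (\<Sum>n\<in>K. w n * Gam)" by (intro sum_mono mult_left_mono bG w0)
    also have "\<dots> = Gam" by (simp add: w1 flip: sum_distrib_right)
    finally show ?thesis .
  qed
  define SA where "SA = (\<Sum>n\<in>K. w n * a n)"
  define SBv where "SBv = (\<Sum>n\<in>K. w n * b n)"
  have "(norm (u - \<tau> *\<^sub>R gb))\<^sup>2 \<le> (norm u)\<^sup>2 - 2 * \<tau> * (SA - SBv + \<rho> / 2 * (norm u)\<^sup>2)
        + \<tau>\<^sup>2 * (2 * \<theta> * SA)"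
    unfolding e1 SA_def SBv_def using i1 i2 tpos
    by (intro add_mono diff_mono order_refl mult_left_mono) auto
  also have "\<dots> = (1 - \<rho> * \<tau>) * (norm u)\<^sup>2 + 2 * \<tau> * SBv - 2 * \<tau> * SA * (1 - \<theta> * \<tau>)"
    by (simp add: algebra_simps power2_eq_square)
  also have "\<dots> \<le> (1 - \<rho> * \<tau>) * (norm u)\<^sup>2 + 2 * \<tau> * Gam"
  proof -
    have "2 * \<tau> * SA * (1 - \<theta> * \<tau>) \<ge> 0" using tpos SA0 tth unfolding SA_def by simp
    moreover have "2 * \<tau> * SBv \<le> 2 * \<tau> * Gam" using SB tpos unfolding SBv_def by simp
    ultimately show ?thesis by linarith
  qed
  also have "2 * \<tau> * Gam \<le> 2 * \<tau>\<^sup>2 * vrho * Gam"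
  proof -
    have "2 * \<tau> * Gam * 1 \<le> 2 * \<tau> * Gam * (\<tau> * vrho)"
      using tvr tpos Gam0 by (intro mult_left_mono) auto
    then show ?thesis by (simp add: power2_eq_square algebra_simps)
  qed
  finally show ?thesis unfolding u_def gb_def Gam_def by simp
qed



lemma (in prob_space) normal_facts:
  assumes s: "\<sigma> > 0" and D: "distributed M lborel X (normal_density 0 \<sigma>)"
  shows "integrable M X" "integrable M (\<lambda>x. (X x)\<^sup>2)" "expectation X = 0"
    "expectation (\<lambda>x. (X x)\<^sup>2) = \<sigma>\<^sup>2"
proof -
  show "integrable M X"
  proof -
    have "integrable lborel (\<lambda>x. normal_density 0 \<sigma> x * x)"
      using integrable_normal_moment_nz_1 s by blast
    then show ?thesis using distributed_integrable[OF D, of "\<lambda>x. x"] by simp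
  qed
  show "integrable M (\<lambda>x. (X x)\<^sup>2)"
  proof -
    have "integrable lborel (\<lambda>x. normal_density 0 \<sigma> x * x\<^sup>2)"
      using integrable_normal_moment[of \<sigma> 0 2] s by simp
    then show ?thesis using distributed_integrable[OF D, of "\<lambda>x. x\<^sup>2"] by simp
  qed
  show E0: "expectation X = 0" using normal_distributed_expectation[OF s D] .
  show "expectation (\<lambda>x. (X x)\<^sup>2) = \<sigma>\<^sup>2" using normal_distributed_variance[OF s D] E0 by simp
qed

lemma (in prob_space) sum_sq_indep:
  fixes Y :: "'i \<Rightarrow> 'a \<Rightarrow> real"
  assumes I: "finite I" and ind: "indep_vars (\<lambda>_. borel) Y I"
    and int1: "\<And>k. k \<in> I \<Longrightarrow> integrable M (Y k)"
    and int2: "\<And>k. k \<in> I \<Longrightarrow> integrable M (\<lambda>\<omega>. (Y k \<omega>)\<^sup>2)"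
    and E0: "\<And>k. k \<in> I \<Longrightarrow> expectation (Y k) = 0"
  shows "integrable M (\<lambda>\<omega>. (\<Sum>k\<in>I. a k * Y k \<omega>)\<^sup>2)"
    "expectation (\<lambda>\<omega>. (\<Sum>k\<in>I. a k * Y k \<omega>)\<^sup>2) = (\<Sum>k\<in>I. (a k)\<^sup>2 * expectation (\<lambda>\<omega>. (Y k \<omega>)\<^sup>2))"
proof -
  have pair: "indep_var borel (Y k) borel (Y l)" if "k \<in> I" "l \<in> I" "k \<noteq> l" for k l
  proof -
    have "indep_vars (\<lambda>_. borel) Y (insert k {l})"
      using that by (intro indep_vars_subset[OF ind]) auto
    from indep_vars_sum[OF _ _ this] that have "indep_var borel (Y k) borel (\<lambda>\<omega>. \<Sum>i\<in>{l}. Y i \<omega>)"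
      by auto
    then show ?thesis by simp
  qed
  have sq: "(\<lambda>\<omega>. (\<Sum>k\<in>I. a k * Y k \<omega>)\<^sup>2) = (\<lambda>\<omega>. \<Sum>k\<in>I. \<Sum>l\<in>I. a k * a l * (Y k \<omega> * Y l \<omega>))"
    by (auto simp: power2_eq_square sum_product intro!: sum.cong)
  have tint: "integrable M (\<lambda>\<omega>. Y k \<omega> * Y l \<omega>)" if "k \<in> I" "l \<in> I" for k l
  proof (cases "k = l")
    case True then show ?thesis using int2[OF that(1)] by (simp add: power2_eq_square)
  next
    case False then show ?thesis using pair[OF that False] int1 that by (intro indep_var_integrable) auto
  qed
  have tval: "expectation (\<lambda>\<omega>. Y k \<omega> * Y l \<omega>) = (if k = l then expectation (\<lambda>\<omega>. (Y k \<omega>)\<^sup>2) else 0)"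
    if "k \<in> I" "l \<in> I" for k l
  proof (cases "k = l")
    case True then show ?thesis by (simp add: power2_eq_square)
  next
    case False then show ?thesis using pair[OF that False] int1 that E0
      by (simp add: indep_var_lebesgue_integral)
  qed
  show "integrable M (\<lambda>\<omega>. (\<Sum>k\<in>I. a k * Y k \<omega>)\<^sup>2)"
    unfolding sq by (intro Bochner_Integration.integrable_sum integrable_mult_right tint)
  have "expectation (\<lambda>\<omega>. (\<Sum>k\<in>I. a k * Y k \<omega>)\<^sup>2)
      = (\<Sum>k\<in>I. expectation (\<lambda>\<omega>. \<Sum>l\<in>I. a k * a l * (Y k \<omega> * Y l \<omega>)))"
    unfolding sq by (intro Bochner_Integration.integral_sum Bochner_Integration.integrable_sum integrable_mult_right tint)
  also have "\<dots> = (\<Sum>k\<in>I. \<Sum>l\<in>I. expectation (\<lambda>\<omega>. a k * a l * (Y k \<omega> * Y l \<omega>)))"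
    by (intro sum.cong refl Bochner_Integration.integral_sum integrable_mult_right tint)
  also have "\<dots> = (\<Sum>k\<in>I. \<Sum>l\<in>I. a k * a l * expectation (\<lambda>\<omega>. Y k \<omega> * Y l \<omega>))"
    by simp
  also have "\<dots> = (\<Sum>k\<in>I. \<Sum>l\<in>I. if l = k then a k * a l * expectation (\<lambda>\<omega>. (Y k \<omega>)\<^sup>2) else 0)"
    using tval by (intro sum.cong refl) auto
  also have "\<dots> = (\<Sum>k\<in>I. (a k)\<^sup>2 * expectation (\<lambda>\<omega>. (Y k \<omega>)\<^sup>2))"
    using I by (simp add: power2_eq_square)
  finally show "expectation (\<lambda>\<omega>. (\<Sum>k\<in>I. a k * Y k \<omega>)\<^sup>2) = (\<Sum>k\<in>I. (a k)\<^sup>2 * expectation (\<lambda>\<omega>. (Y k \<omega>)\<^sup>2))" .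
qed


lemma sum_opt_sing:
  assumes "finite J"
  shows "(\<Sum>q\<in>(Some ` J \<union> {None}) \<times> {i}. f q) = (\<Sum>n\<in>J. f (Some n, i)) + f (None, i)"
proof -
  have "(Some ` J \<union> {None}) \<times> {i} = insert (None, i) ((\<lambda>n. (Some n, i)) ` J)" by auto
  moreover have "(None, i) \<notin> (\<lambda>n. (Some n, i)) ` J" by auto
  moreover have "inj_on (\<lambda>n. (Some n, i)) J" by (auto simp: inj_on_def)
  ultimately show ?thesis using assms by (simp add: sum.reindex add.commute)
qed

lemma norm_sq_vec: "(norm (v :: real^'d))\<^sup>2 = (\<Sum>i\<in>UNIV. (v $ i)\<^sup>2)"
  unfolding power2_norm_eq_inner inner_vec_def by (simp add: power2_eq_square)

lemma norm_diff_sq_le: "(norm (a - b :: 'a::real_normed_vector))\<^sup>2 \<le> 2 * (norm a)\<^sup>2 + 2 * (norm b)\<^sup>2"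
proof -
  have "norm (a - b) \<le> norm a + norm b" by (rule norm_triangle_ineq4)
  then have "(norm (a - b))\<^sup>2 \<le> (norm a + norm b)\<^sup>2" by (simp add: power_mono)
  also have "\<dots> \<le> 2 * (norm a)\<^sup>2 + 2 * (norm b)\<^sup>2"
  proof -
    have "0 \<le> (norm a - norm b)\<^sup>2" by simp
    then show ?thesis by (simp add: power2_eq_square algebra_simps)
  qed
  finally show ?thesis .
qed

lemma norm_add_sq_le: "(norm (a + b :: 'a::real_normed_vector))\<^sup>2 \<le> 2 * (norm a)\<^sup>2 + 2 * (norm b)\<^sup>2"
  using norm_diff_sq_le[of a "-b"] by simp

lemma coord_sq_le: "(v $ i)\<^sup>2 \<le> (norm (v :: real^'d))\<^sup>2"
  using component_le_norm_cart[of v i] by (metis abs_ge_zero power2_abs power_mono)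

lemma (in prob_space) indep_set_mono2:
  "indep_set A B \<Longrightarrow> A' \<subseteq> A \<Longrightarrow> B' \<subseteq> B \<Longrightarrow> indep_set A' B'"
  unfolding indep_set_def by (rule indep_sets_mono_sets) (auto split: bool.split)

lemma vimage_gen_sub:
  assumes f: "f \<in> measurable N (borel :: real measure)"
    and V: "\<And>\<omega>. \<omega> \<in> space M \<Longrightarrow> V \<omega> \<in> space N"
    and Z: "\<And>\<omega>. \<omega> \<in> space M \<Longrightarrow> Z \<omega> = f (V \<omega>)"
  shows "sigma_sets (space M) {Z -` A \<inter> space M | A. A \<in> sets borel}
       \<subseteq> sigma_sets (space M) {V -` A \<inter> space M | A. A \<in> sets N}"
proof (rule sigma_sets_subseteq)
  show "{Z -` A \<inter> space M | A. A \<in> sets borel} \<subseteq> {V -` A \<inter> space M | A. A \<in> sets N}"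
  proof
    fix T assume "T \<in> {Z -` A \<inter> space M | A. A \<in> sets borel}"
    then obtain A where T: "T = Z -` A \<inter> space M" and A: "A \<in> sets borel" by auto
    have "T = V -` (f -` A \<inter> space N) \<inter> space M" using V Z unfolding T by auto
    moreover have "f -` A \<inter> space N \<in> sets N" using measurable_sets[OF f A] .
    ultimately show "T \<in> {V -` A \<inter> space M | A. A \<in> sets N}" by blast
  qed
qed

theorem theorem1:
  fixes M :: "'a measure"
    and N :: nat
    and L :: "nat \<Rightarrow> real^'d \<Rightarrow> real"
    and grad :: "nat \<Rightarrow> real^'d \<Rightarrow> real^'d"
    and mstar :: "real^'d" and mloc :: "nat \<Rightarrow> real^'d"
    and K J :: "nat set"
    and h P :: "nat \<Rightarrow> real"
    and m :: "'a \<Rightarrow> real^'d"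
    and g e :: "nat \<Rightarrow> 'a \<Rightarrow> real^'d"
    and r :: "'a \<Rightarrow> real^'d"
    and G \<sigma>B vth \<theta> \<rho> vrho \<tau> :: real
  assumes prob: "prob_space M"
    \<comment> \<open>local objectives, gradients, minimizers\<close>
    and grad: "\<And>n x. n \<in> {1..N} \<Longrightarrow> GDERIV (L n) x :> grad n x"
    and mstar_min: "\<And>x. (1 / real N) * (\<Sum>n=1..N. L n mstar) \<le> (1 / real N) * (\<Sum>n=1..N. L n x)"
    and mloc_min: "\<And>n x. n \<in> {1..N} \<Longrightarrow> L n (mloc n) \<le> L n x"
    \<comment> \<open>(A2) smoothness and (A3) strong convexity\<close>
    and smooth: "\<And>n x y. n \<in> {1..N} \<Longrightarrow>
        L n y - L n x \<le> (y - x) \<bullet> grad n x + \<theta> / 2 * (norm (y - x))\<^sup>2"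
    and strconv: "\<And>n x y. n \<in> {1..N} \<Longrightarrow>
        L n y - L n x \<ge> (y - x) \<bullet> grad n x + \<rho> / 2 * (norm (y - x))\<^sup>2"
    and \<theta>_pos: "\<theta> > 0" and \<rho>_pos: "\<rho> > 0"
    \<comment> \<open>uploaders and jammers\<close>
    and K_sub: "K \<subseteq> {1..N}" and K_ne: "K \<noteq> {}"
    and J_sub: "J \<subseteq> {1..N} - K"
    and h_pos: "\<And>n. n \<in> {1..N} \<Longrightarrow> h n > 0"
    and P_pos: "\<And>n. n \<in> {1..N} \<Longrightarrow> P n > 0"
    \<comment> \<open>current model (random) and stochastic gradients\<close>
    and m_meas: "m \<in> borel_measurable M"
    and m_L2: "integrable M (\<lambda>\<omega>. (norm (m \<omega> - mstar))\<^sup>2)"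
    and g_meas: "\<And>n. n \<in> K \<Longrightarrow> g n \<in> borel_measurable M"
    and unbiased: "\<And>n i. n \<in> K \<Longrightarrow>
        AE \<omega> in M. real_cond_exp M (vimage_algebra (space M) m borel) (\<lambda>\<omega>. g n \<omega> $ i) \<omega>
                     = grad n (m \<omega>) $ i"
    and var_int: "\<And>n. n \<in> K \<Longrightarrow> integrable M (\<lambda>\<omega>. (norm (g n \<omega> - grad n (m \<omega>)))\<^sup>2)"
    and var_bound: "\<And>n. n \<in> K \<Longrightarrow>
        prob_space.expectation M (\<lambda>\<omega>. (norm (g n \<omega> - grad n (m \<omega>)))\<^sup>2) \<le> vth\<^sup>2"
    and g_exp_bound: "\<And>n. n \<in> K \<Longrightarrow> prob_space.expectation M (\<lambda>\<omega>. norm (g n \<omega>)) \<le> G"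
    and g_bound: "\<And>n \<omega>. n \<in> K \<Longrightarrow> \<omega> \<in> space M \<Longrightarrow> norm (g n \<omega>) \<le> G"
    \<comment> \<open>Gaussian jamming noise and receiver noise\<close>
    and \<sigma>B_pos: "\<sigma>B > 0"
    and e_gauss: "\<And>n i. n \<in> J \<Longrightarrow> distributed M lborel (\<lambda>\<omega>. e n \<omega> $ i) std_normal_density"
    and r_gauss: "\<And>i. distributed M lborel (\<lambda>\<omega>. r \<omega> $ i) (normal_density 0 (sqrt \<sigma>B))"
    and noise_indep: "prob_space.indep_vars M (\<lambda>_. borel) (noise_fam e r)
                        ((Some ` J \<union> {None}) \<times> UNIV)"
    and noise_indep_data: "prob_space.indep_set M
        (sigma_sets (space M) {(\<lambda>\<omega>. \<lambda>k\<in>(Some ` J \<union> {None}) \<times> UNIV. noise_fam e r k \<omega>) -` A \<inter> space M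
           | A. A \<in> sets (PiM ((Some ` J \<union> {None}) \<times> UNIV) (\<lambda>_. borel))})
        (sigma_sets (space M) {(\<lambda>\<omega>. (m \<omega>, \<lambda>n\<in>K. g n \<omega>)) -` A \<inter> space M
           | A. A \<in> sets (borel \<Otimes>\<^sub>M PiM K (\<lambda>_. borel))})"
    \<comment> \<open>step size\<close>
    and vrho_pos: "vrho > 0"
    and \<tau>_lo: "1 / vrho \<le> \<tau>" and \<tau>_hi: "\<tau> \<le> 1 / \<theta>"
  shows
    "let p = (\<lambda>n. h n * sqrt (P n));
         S = (\<Sum>n\<in>K. p n);
         ghat = (\<lambda>\<omega>. \<Sum>n\<in>K. (p n / S) *\<^sub>R g n \<omega>);
         rtot = (\<lambda>\<omega>. (\<Sum>n\<in>J. (p n / sqrt (real CARD('d))) *\<^sub>R e n \<omega>) + r \<omega>);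
         mnext = (\<lambda>\<omega>. m \<omega> - \<tau> *\<^sub>R (ghat \<omega> + (G / S) *\<^sub>R rtot \<omega>))
     in prob_space.expectation M (\<lambda>\<omega>. (norm (mnext \<omega> - mstar))\<^sup>2)
        \<le> (1 - \<rho> * \<tau>) * prob_space.expectation M (\<lambda>\<omega>. (norm (m \<omega> - mstar))\<^sup>2)
          + \<tau>\<^sup>2 * (2 * vrho * Gamma_het N \<theta> mstar mloc + vth\<^sup>2
                   + G\<^sup>2 * Psi N CARD('d) \<sigma>B J K p)"
proof -
  interpret prob_space M by (rule prob)
  define p where "p = (\<lambda>n. h n * sqrt (P n))"
  define S where "S = (\<Sum>n\<in>K. p n)"
  define ghat where "ghat = (\<lambda>\<omega>. \<Sum>n\<in>K. (p n / S) *\<^sub>R g n \<omega>)"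
  define rtot where "rtot = (\<lambda>\<omega>. (\<Sum>n\<in>J. (p n / sqrt (real CARD('d))) *\<^sub>R e n \<omega>) + r \<omega>)"
  define mnext where "mnext = (\<lambda>\<omega>. m \<omega> - \<tau> *\<^sub>R (ghat \<omega> + (G / S) *\<^sub>R rtot \<omega>))"
  define Gam where "Gam = Gamma_het N \<theta> mstar mloc"
  define Em where "Em = expectation (\<lambda>\<omega>. (norm (m \<omega> - mstar))\<^sup>2)"
  have Kf: "finite K" using K_sub finite_subset by blast
  have Jf: "finite J" using J_sub finite_subset by blast
  have pK: "\<And>n. n \<in> K \<Longrightarrow> p n > 0" unfolding p_def using K_sub h_pos P_pos by auto
  have Spos: "S > 0" unfolding S_def using pK Kf K_ne by (intro sum_pos) auto
  have w0: "\<And>n. n \<in> K \<Longrightarrow> p n / S \<ge> 0" using pK Spos by (simp add: less_imp_le)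
  have w1: "(\<Sum>n\<in>K. p n / S) = 1" using Spos unfolding S_def by (simp add: sum_divide_distrib[symmetric])
  have N1: "real N \<ge> 1" using K_sub K_ne by fastforce
  have tpos: "\<tau> > 0" using \<tau>_lo vrho_pos by (meson divide_pos_pos less_le_trans zero_less_one)
  have dpos: "real CARD('d) > 0" by simp
  note [measurable] = m_meas
  have em: "\<And>n. n \<in> J \<Longrightarrow> e n \<in> borel_measurable M"
  proof -
    fix n assume n: "n \<in> J"
    have "\<And>i. (\<lambda>\<omega>. e n \<omega> $ i) \<in> borel_measurable M"
      using distributed_measurable[OF e_gauss[OF n]] by simp
    from vec_lambda_meas[of "\<lambda>i \<omega>. e n \<omega> $ i", OF this] show "e n \<in> borel_measurable M" by simp
  qed
  have rm: "r \<in> borel_measurable M"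
  proof -
    have "\<And>i. (\<lambda>\<omega>. r \<omega> $ i) \<in> borel_measurable M"
      using distributed_measurable[OF r_gauss] by simp
    from vec_lambda_meas[of "\<lambda>i \<omega>. r \<omega> $ i", OF this] show ?thesis by simp
  qed
  have ghat_m: "ghat \<in> borel_measurable M"
    unfolding ghat_def by (intro borel_measurable_sum borel_measurable_scaleR borel_measurable_const g_meas)
  have rtot_m: "rtot \<in> borel_measurable M"
    unfolding rtot_def by (intro borel_measurable_add borel_measurable_sum borel_measurable_scaleR borel_measurable_const em rm)
  have ghat_b: "\<And>\<omega>. \<omega> \<in> space M \<Longrightarrow> norm (ghat \<omega>) \<le> G"
  proof -
    fix \<omega> assume \<omega>: "\<omega> \<in> space M"
    have "norm (ghat \<omega>) \<le> (\<Sum>n\<in>K. norm ((p n / S) *\<^sub>R g n \<omega>))" unfolding ghat_def by (rule norm_sum)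
    also have "\<dots> \<le> (\<Sum>n\<in>K. (p n / S) * G)"
    proof (rule sum_mono)
      fix n assume n: "n \<in> K"
      have "norm ((p n / S) *\<^sub>R g n \<omega>) = (p n / S) * norm (g n \<omega>)" using pK[OF n] Spos by simp
      also have "\<dots> \<le> (p n / S) * G" by (rule mult_left_mono[OF g_bound[OF n \<omega>] w0[OF n]])
      finally show "norm ((p n / S) *\<^sub>R g n \<omega>) \<le> (p n / S) * G" .
    qed
    also have "\<dots> = G" using w1 sum_distrib_right[of "\<lambda>n. p n / S" K G] by simp
    finally show "norm (ghat \<omega>) \<le> G" .
  qed
  define Jall where "Jall = (Some ` J \<union> {None}) \<times> (UNIV :: 'd set)"
  define cc where "cc = (\<lambda>k::nat option. case k of Some n \<Rightarrow> p n / sqrt (real CARD('d)) | None \<Rightarrow> 1)"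
  define Y where "Y = noise_fam e r"
  have Ysome: "\<And>n (i::'d). Y (Some n, i) = (\<lambda>\<omega>. e n \<omega> $ i)" unfolding Y_def noise_fam_def by auto
  have Ynone: "\<And>i::'d. Y (None, i) = (\<lambda>\<omega>. r \<omega> $ i)" unfolding Y_def noise_fam_def by auto
  have NS: "\<And>n (i::'d). n \<in> J \<Longrightarrow> integrable M (\<lambda>\<omega>. e n \<omega> $ i) \<and> integrable M (\<lambda>\<omega>. (e n \<omega> $ i)\<^sup>2)
      \<and> expectation (\<lambda>\<omega>. e n \<omega> $ i) = 0 \<and> expectation (\<lambda>\<omega>. (e n \<omega> $ i)\<^sup>2) = 1"
    using normal_facts[of 1, OF _ e_gauss] by simp
  have sBpos: "sqrt \<sigma>B > 0" using \<sigma>B_pos by simp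
  have NR: "\<And>i::'d. integrable M (\<lambda>\<omega>. r \<omega> $ i) \<and> integrable M (\<lambda>\<omega>. (r \<omega> $ i)\<^sup>2)
      \<and> expectation (\<lambda>\<omega>. r \<omega> $ i) = 0 \<and> expectation (\<lambda>\<omega>. (r \<omega> $ i)\<^sup>2) = \<sigma>B"
    using normal_facts[OF sBpos r_gauss] \<sigma>B_pos by simp
  have indY: "indep_vars (\<lambda>_. borel) Y Jall" using noise_indep unfolding Y_def Jall_def .
  have rtot_coord: "\<And>\<omega> (i::'d). rtot \<omega> $ i = (\<Sum>q\<in>(Some ` J \<union> {None}) \<times> {i}. cc (fst q) * Y q \<omega>)"
    unfolding sum_opt_sing[OF Jf] by (simp add: rtot_def cc_def Ysome Ynone)
  have Yq: "\<And>q (i::'d). q \<in> (Some ` J \<union> {None}) \<times> {i} \<Longrightarrow> integrable M (Y q) \<and> integrable M (\<lambda>\<omega>. (Y q \<omega>)\<^sup>2)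
      \<and> expectation (Y q) = 0"
  proof -
    fix q and i :: 'd assume "q \<in> (Some ` J \<union> {None}) \<times> {i}"
    then consider n where "n \<in> J" "q = (Some n, i)" | "q = (None, i)" by auto
    then show "integrable M (Y q) \<and> integrable M (\<lambda>\<omega>. (Y q \<omega>)\<^sup>2) \<and> expectation (Y q) = 0"
      by cases (simp_all add: Ysome Ynone NS NR)
  qed
  have Rsq: "\<And>i::'d. integrable M (\<lambda>\<omega>. (rtot \<omega> $ i)\<^sup>2) \<and>
      expectation (\<lambda>\<omega>. (rtot \<omega> $ i)\<^sup>2) = (\<Sum>n\<in>J. (p n)\<^sup>2) / real CARD('d) + \<sigma>B"
  proof -
    fix i :: 'd
    let ?I = "(Some ` J \<union> {None}) \<times> {i}"
    have fin: "finite ?I" using Jf by simp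
    have sub: "?I \<subseteq> Jall" unfolding Jall_def by auto
    have ind: "indep_vars (\<lambda>_. borel) Y ?I" by (rule indep_vars_subset[OF indY sub])
    have A1: "\<And>q. q \<in> ?I \<Longrightarrow> integrable M (Y q)" using Yq by blast
    have A2: "\<And>q. q \<in> ?I \<Longrightarrow> integrable M (\<lambda>\<omega>. (Y q \<omega>)\<^sup>2)" using Yq by blast
    have A3: "\<And>q. q \<in> ?I \<Longrightarrow> expectation (Y q) = 0" using Yq by blast
    note SQ = sum_sq_indep[OF fin ind A1 A2 A3, of "\<lambda>q. cc (fst q)"]
    have eq: "(\<lambda>\<omega>. (rtot \<omega> $ i)\<^sup>2) = (\<lambda>\<omega>. (\<Sum>q\<in>?I. cc (fst q) * Y q \<omega>)\<^sup>2)"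
      using rtot_coord by simp
    have "(\<Sum>q\<in>?I. (cc (fst q))\<^sup>2 * expectation (\<lambda>\<omega>. (Y q \<omega>)\<^sup>2))
        = (\<Sum>n\<in>J. (p n / sqrt (real CARD('d)))\<^sup>2 * 1) + \<sigma>B"
      unfolding sum_opt_sing[OF Jf] using NS NR by (simp add: cc_def Ysome Ynone)
    also have "\<dots> = (\<Sum>n\<in>J. (p n)\<^sup>2) / real CARD('d) + \<sigma>B"
      by (simp add: power_divide sum_divide_distrib)
    finally have v: "(\<Sum>q\<in>?I. (cc (fst q))\<^sup>2 * expectation (\<lambda>\<omega>. (Y q \<omega>)\<^sup>2))
        = (\<Sum>n\<in>J. (p n)\<^sup>2) / real CARD('d) + \<sigma>B" .
    show "integrable M (\<lambda>\<omega>. (rtot \<omega> $ i)\<^sup>2) \<and>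
      expectation (\<lambda>\<omega>. (rtot \<omega> $ i)\<^sup>2) = (\<Sum>n\<in>J. (p n)\<^sup>2) / real CARD('d) + \<sigma>B"
      unfolding eq using SQ v by simp
  qed
  have Rmean: "\<And>i::'d. integrable M (\<lambda>\<omega>. rtot \<omega> $ i) \<and> expectation (\<lambda>\<omega>. rtot \<omega> $ i) = 0"
  proof -
    fix i :: 'd
    let ?I = "(Some ` J \<union> {None}) \<times> {i}"
    have eq: "(\<lambda>\<omega>. rtot \<omega> $ i) = (\<lambda>\<omega>. \<Sum>q\<in>?I. cc (fst q) * Y q \<omega>)"
      using rtot_coord by simp
    have int: "\<And>q. q \<in> ?I \<Longrightarrow> integrable M (\<lambda>\<omega>. cc (fst q) * Y q \<omega>)"
      using Yq by (intro integrable_mult_right) blast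
    have "expectation (\<lambda>\<omega>. \<Sum>q\<in>?I. cc (fst q) * Y q \<omega>) = (\<Sum>q\<in>?I. expectation (\<lambda>\<omega>. cc (fst q) * Y q \<omega>))"
      by (rule Bochner_Integration.integral_sum[OF int])
    also have "\<dots> = 0" using Yq by (intro sum.neutral) simp
    finally show "integrable M (\<lambda>\<omega>. rtot \<omega> $ i) \<and> expectation (\<lambda>\<omega>. rtot \<omega> $ i) = 0"
      unfolding eq using int by (intro conjI Bochner_Integration.integrable_sum) auto
  qed
  have R2int: "integrable M (\<lambda>\<omega>. (norm (rtot \<omega>))\<^sup>2)"
    unfolding norm_sq_vec using Rsq by (intro Bochner_Integration.integrable_sum) blast
  have R2: "expectation (\<lambda>\<omega>. (norm (rtot \<omega>))\<^sup>2) = (\<Sum>n\<in>J. (p n)\<^sup>2) + real CARD('d) * \<sigma>B"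
  proof -
    have "expectation (\<lambda>\<omega>. (norm (rtot \<omega>))\<^sup>2) = (\<Sum>i\<in>UNIV. expectation (\<lambda>\<omega>. (rtot \<omega> $ i)\<^sup>2))"
      unfolding norm_sq_vec using Rsq by (intro Bochner_Integration.integral_sum) blast
    also have "\<dots> = real CARD('d) * ((\<Sum>n\<in>J. (p n)\<^sup>2) / real CARD('d) + \<sigma>B)"
      using Rsq by simp
    also have "\<dots> = (\<Sum>n\<in>J. (p n)\<^sup>2) + real CARD('d) * \<sigma>B"
      using dpos by (simp add: field_simps)
    finally show ?thesis .
  qed
  define X where "X = (\<lambda>\<omega>. m \<omega> - mstar - \<tau> *\<^sub>R ghat \<omega>)"
  have X_m: "X \<in> borel_measurable M" unfolding X_def
    by (intro borel_measurable_diff borel_measurable_scaleR borel_measurable_const m_meas ghat_m)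
  have X2int: "integrable M (\<lambda>\<omega>. (norm (X \<omega>))\<^sup>2)"
  proof -
    have i1: "integrable M (\<lambda>\<omega>. 2 * (norm (m \<omega> - mstar))\<^sup>2 + 2 * (\<tau> * G)\<^sup>2)"
      using m_L2 by (intro Bochner_Integration.integrable_add integrable_mult_right) auto
    have i2: "(\<lambda>\<omega>. (norm (X \<omega>))\<^sup>2) \<in> borel_measurable M" using X_m by measurable
    have i3: "AE \<omega> in M. norm ((norm (X \<omega>))\<^sup>2) \<le> norm (2 * (norm (m \<omega> - mstar))\<^sup>2 + 2 * (\<tau> * G)\<^sup>2)"
    proof (rule AE_I2)
      fix \<omega> assume \<omega>: "\<omega> \<in> space M"
      have "norm (\<tau> *\<^sub>R ghat \<omega>) \<le> \<tau> * G" using ghat_b[OF \<omega>] tpos by (simp add: mult_left_mono)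
      then have "(norm (\<tau> *\<^sub>R ghat \<omega>))\<^sup>2 \<le> (\<tau> * G)\<^sup>2" by (intro power_mono) auto
      then have "(norm (X \<omega>))\<^sup>2 \<le> 2 * (norm (m \<omega> - mstar))\<^sup>2 + 2 * (\<tau> * G)\<^sup>2"
        using norm_diff_sq_le[of "m \<omega> - mstar" "\<tau> *\<^sub>R ghat \<omega>"] unfolding X_def by simp
      then show "norm ((norm (X \<omega>))\<^sup>2) \<le> norm (2 * (norm (m \<omega> - mstar))\<^sup>2 + 2 * (\<tau> * G)\<^sup>2)"
        by simp
    qed
    show ?thesis by (rule Bochner_Integration.integrable_bound[OF i1 i2 i3])
  qed
  have Xi_int: "\<And>i. integrable M (\<lambda>\<omega>. X \<omega> $ i)"
  proof -
    fix i
    have m1: "(\<lambda>\<omega>. X \<omega> $ i) \<in> borel_measurable M" using X_m by measurable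
    have "integrable M (\<lambda>\<omega>. (X \<omega> $ i)\<^sup>2)"
      by (rule Bochner_Integration.integrable_bound[OF X2int]) (use X_m in \<open>measurable\<close>, simp add: coord_sq_le)
    then show "integrable M (\<lambda>\<omega>. X \<omega> $ i)" by (rule square_integrable_imp_integrable[OF m1])
  qed
  have Yq_m: "\<And>q. q \<in> Jall \<Longrightarrow> noise_fam e r q \<in> borel_measurable M"
  proof -
    fix q assume "q \<in> Jall"
    then consider n i where "n \<in> J" "q = (Some n, i)" | i where "q = (None, i)" unfolding Jall_def by auto
    then show "noise_fam e r q \<in> borel_measurable M"
    proof cases
      case 1 then show ?thesis using em[OF 1(1)] Ysome[of n i] unfolding Y_def by (simp add: vec_nth_meas)
    next
      case 2 then show ?thesis using rm Ynone[of i] unfolding Y_def by (simp add: vec_nth_meas)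
    qed
  qed
  have IVi: "\<And>i. indep_var borel (\<lambda>\<omega>. rtot \<omega> $ i) borel (\<lambda>\<omega>. X \<omega> $ i)"
  proof -
    fix i :: 'd
    let ?I = "(Some ` J \<union> {None}) \<times> {i}"
    define Y1 where "Y1 = (\<lambda>v. \<Sum>q\<in>?I. cc (fst q) * v q)"
    define Y2 where "Y2 = (\<lambda>z::(real^'d) \<times> (nat \<Rightarrow> real^'d). (fst z - mstar - \<tau> *\<^sub>R (\<Sum>n\<in>K. (p n / S) *\<^sub>R snd z n)) $ i)"
    have Y1m: "Y1 \<in> borel_measurable (PiM Jall (\<lambda>_. borel))"
      unfolding Y1_def
      by (intro borel_measurable_sum borel_measurable_times borel_measurable_const measurable_component_singleton)
         (auto simp: Jall_def)
    have Y2m: "Y2 \<in> borel_measurable (borel \<Otimes>\<^sub>M PiM K (\<lambda>_. borel))"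
      unfolding Y2_def by measurable
    have "?I \<subseteq> Jall" unfolding Jall_def by auto
    then have Z1: "\<And>\<omega>. rtot \<omega> $ i = Y1 (\<lambda>k\<in>Jall. noise_fam e r k \<omega>)"
      unfolding rtot_coord Y1_def Y_def by (intro sum.cong refl) (auto simp: Jall_def)
    have Z2: "\<And>\<omega>. X \<omega> $ i = Y2 (m \<omega>, \<lambda>n\<in>K. g n \<omega>)"
      unfolding Y2_def X_def ghat_def by (auto intro!: sum.cong arg_cong[where f="\<lambda>v. v $ i"])
    show "indep_var borel (\<lambda>\<omega>. rtot \<omega> $ i) borel (\<lambda>\<omega>. X \<omega> $ i)"
      unfolding indep_var_eq
    proof (intro conjI)
      show "random_variable borel (\<lambda>\<omega>. rtot \<omega> $ i)" using rtot_m by measurable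
      show "random_variable borel (\<lambda>\<omega>. X \<omega> $ i)" using X_m by measurable
      show "indep_set (sigma_sets (space M) {(\<lambda>\<omega>. rtot \<omega> $ i) -` A \<inter> space M |A. A \<in> sets borel})
          (sigma_sets (space M) {(\<lambda>\<omega>. X \<omega> $ i) -` A \<inter> space M |A. A \<in> sets borel})"
      proof (rule indep_set_mono2[OF noise_indep_data])
        show "sigma_sets (space M) {(\<lambda>\<omega>. rtot \<omega> $ i) -` A \<inter> space M |A. A \<in> sets borel}
          \<subseteq> sigma_sets (space M) {(\<lambda>\<omega>. \<lambda>k\<in>(Some ` J \<union> {None}) \<times> UNIV. noise_fam e r k \<omega>) -` A \<inter> space M
           | A. A \<in> sets (PiM ((Some ` J \<union> {None}) \<times> UNIV) (\<lambda>_. borel))}"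
          unfolding Jall_def[symmetric] by (rule vimage_gen_sub[OF Y1m]) (simp_all add: space_PiM Z1)
        show "sigma_sets (space M) {(\<lambda>\<omega>. X \<omega> $ i) -` A \<inter> space M |A. A \<in> sets borel}
          \<subseteq> sigma_sets (space M) {(\<lambda>\<omega>. (m \<omega>, \<lambda>n\<in>K. g n \<omega>)) -` A \<inter> space M
           | A. A \<in> sets (borel \<Otimes>\<^sub>M PiM K (\<lambda>_. borel))}"
          by (rule vimage_gen_sub[OF Y2m]) (simp_all add: space_PiM space_pair_measure Z2)
      qed
    qed
  qed
  have XRi: "\<And>i. integrable M (\<lambda>\<omega>. rtot \<omega> $ i * X \<omega> $ i) \<and> expectation (\<lambda>\<omega>. rtot \<omega> $ i * X \<omega> $ i) = 0"
    using indep_var_lebesgue_integral[OF IVi Rmean[THEN conjunct1] Xi_int]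
      indep_var_integrable[OF IVi Rmean[THEN conjunct1] Xi_int] Rmean by simp
  have XRe: "\<And>\<omega>. X \<omega> \<bullet> rtot \<omega> = (\<Sum>i\<in>UNIV. rtot \<omega> $ i * X \<omega> $ i)"
    by (simp add: inner_vec_def mult.commute)
  have XRint: "integrable M (\<lambda>\<omega>. X \<omega> \<bullet> rtot \<omega>)"
    unfolding XRe using XRi by (intro Bochner_Integration.integrable_sum) blast
  have XR0: "expectation (\<lambda>\<omega>. X \<omega> \<bullet> rtot \<omega>) = 0"
    unfolding XRe using XRi by (subst Bochner_Integration.integral_sum) auto
  define c where "c = \<tau> * (G / S)"
  have mn_eq: "\<And>\<omega>. (norm (mnext \<omega> - mstar))\<^sup>2 = (norm (X \<omega>))\<^sup>2 - 2 * c * (X \<omega> \<bullet> rtot \<omega>) + c\<^sup>2 * (norm (rtot \<omega>))\<^sup>2"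
  proof -
    fix \<omega>
    have h: "mnext \<omega> - mstar = X \<omega> - c *\<^sub>R rtot \<omega>"
      unfolding mnext_def X_def c_def by (simp add: algebra_simps)
    have "(norm (X \<omega> - c *\<^sub>R rtot \<omega>))\<^sup>2 = (norm (X \<omega>))\<^sup>2 - 2 * c * (X \<omega> \<bullet> rtot \<omega>) + c\<^sup>2 * (norm (rtot \<omega>))\<^sup>2"
      unfolding power2_norm_eq_inner
      by (simp add: inner_diff_left inner_diff_right inner_commute algebra_simps power2_eq_square)
    then show "(norm (mnext \<omega> - mstar))\<^sup>2 = (norm (X \<omega>))\<^sup>2 - 2 * c * (X \<omega> \<bullet> rtot \<omega>) + c\<^sup>2 * (norm (rtot \<omega>))\<^sup>2"
      using h by simp
  qed
  have Emn: "expectation (\<lambda>\<omega>. (norm (mnext \<omega> - mstar))\<^sup>2)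
      = expectation (\<lambda>\<omega>. (norm (X \<omega>))\<^sup>2) + c\<^sup>2 * ((\<Sum>n\<in>J. (p n)\<^sup>2) + real CARD('d) * \<sigma>B)"
    unfolding mn_eq using X2int XRint R2int XR0 R2 by simp
  define F where "F = vimage_algebra (space M) m borel"
  have subalg: "subalgebra M F"
    unfolding subalgebra_def F_def
  proof
    show "space (vimage_algebra (space M) m borel) = space M" by simp
    show "sets (vimage_algebra (space M) m borel) \<subseteq> sets M"
      using measurable_sets[OF m_meas] by (subst sets_vimage_algebra2) auto
  qed
  interpret FS: finite_measure_subalgebra M F by unfold_locales (rule subalg)
  have mF: "m \<in> borel_measurable F" unfolding F_def by (rule measurable_vimage_algebra1) simp
  define cg where "cg = (\<lambda>n (i::'d). real_cond_exp M F (\<lambda>\<omega>. g n \<omega> $ i))"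
  have gi_m: "\<And>n i. n \<in> K \<Longrightarrow> (\<lambda>\<omega>. g n \<omega> $ i) \<in> borel_measurable M"
    using g_meas by (simp add: vec_nth_meas)
  have gi_int: "\<And>n i. n \<in> K \<Longrightarrow> integrable M (\<lambda>\<omega>. g n \<omega> $ i)"
  proof -
    fix n i assume n: "n \<in> K"
    have ae: "AE \<omega> in M. norm (g n \<omega> $ i) \<le> norm G"
    proof (rule AE_I2)
      fix \<omega> assume "\<omega> \<in> space M"
      then have "norm (g n \<omega>) \<le> G" by (rule g_bound[OF n])
      then show "norm (g n \<omega> $ i) \<le> norm G" using component_le_norm_cart[of "g n \<omega>" i] by simp
    qed
    show "integrable M (\<lambda>\<omega>. g n \<omega> $ i)"
      by (rule Bochner_Integration.integrable_bound[OF _ gi_m[OF n] ae]) simp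
  qed
  have cgF: "\<And>n i. cg n i \<in> borel_measurable F" unfolding cg_def by (rule borel_measurable_cond_exp)
  have cgM: "\<And>n i. cg n i \<in> borel_measurable M" unfolding cg_def by (rule borel_measurable_cond_exp2)
  define cgv where "cgv = (\<lambda>n \<omega>. \<chi> i. cg n i \<omega>)"
  have cgvM: "\<And>n. cgv n \<in> borel_measurable M" unfolding cgv_def by (intro vec_lambda_meas cgM)
  have AEc: "AE \<omega> in M. \<forall>n\<in>K. cgv n \<omega> = grad n (m \<omega>)"
  proof -
    have "AE \<omega> in M. \<forall>q\<in>K \<times> UNIV. cg (fst q) (snd q) \<omega> = grad (fst q) (m \<omega>) $ snd q"
    proof (rule AE_finite_allI)
      show "finite (K \<times> (UNIV :: 'd set))" using Kf by simp
      fix q :: "nat \<times> 'd" assume "q \<in> K \<times> UNIV"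
      then show "AE \<omega> in M. cg (fst q) (snd q) \<omega> = grad (fst q) (m \<omega>) $ snd q"
        using unbiased[of "fst q" "snd q"] unfolding cg_def F_def by auto
    qed
    then show ?thesis by eventually_elim (auto simp: cgv_def vec_eq_iff)
  qed
  define gb where "gb = (\<lambda>\<omega>. \<Sum>n\<in>K. (p n / S) *\<^sub>R cgv n \<omega>)"
  define A where "A = (\<lambda>\<omega>. m \<omega> - mstar - \<tau> *\<^sub>R gb \<omega>)"
  define D where "D = (\<lambda>\<omega>. ghat \<omega> - gb \<omega>)"
  have XAD: "\<And>\<omega>. X \<omega> = A \<omega> - \<tau> *\<^sub>R D \<omega>" unfolding X_def A_def D_def by (simp add: algebra_simps)
  have gbM: "gb \<in> borel_measurable M" unfolding gb_def
    by (intro borel_measurable_sum borel_measurable_scaleR borel_measurable_const cgvM)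
  have AM: "A \<in> borel_measurable M" unfolding A_def
    by (intro borel_measurable_diff borel_measurable_scaleR borel_measurable_const m_meas gbM)
  have DM: "D \<in> borel_measurable M" unfolding D_def
    by (intro borel_measurable_diff ghat_m gbM)
  have Ai_eq: "\<And>i. (\<lambda>\<omega>. A \<omega> $ i) = (\<lambda>\<omega>. m \<omega> $ i - mstar $ i - \<tau> * (\<Sum>n\<in>K. (p n / S) * cg n i \<omega>))"
    by (simp add: A_def gb_def cgv_def)
  have AF: "\<And>i. (\<lambda>\<omega>. A \<omega> $ i) \<in> borel_measurable F"
    unfolding Ai_eq
    by (intro borel_measurable_diff borel_measurable_times borel_measurable_const borel_measurable_sum
        cgF vec_nth_meas mF)
  have De: "\<And>\<omega>. D \<omega> = (\<Sum>n\<in>K. (p n / S) *\<^sub>R (g n \<omega> - cgv n \<omega>))"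
    by (simp add: D_def ghat_def gb_def scaleR_diff_right sum_subtractf)
  have Di_eq: "\<And>\<omega> i. D \<omega> $ i = (\<Sum>n\<in>K. (p n / S) * (g n \<omega> $ i - cg n i \<omega>))"
    by (simp add: De cgv_def)
  have gradm_m: "\<And>n. n \<in> K \<Longrightarrow> (\<lambda>\<omega>. (norm (g n \<omega> - grad n (m \<omega>)))\<^sup>2) \<in> borel_measurable M"
    using var_int by (rule borel_measurable_integrable)
  have AEn: "\<And>n. n \<in> K \<Longrightarrow> AE \<omega> in M. (norm (g n \<omega> - cgv n \<omega>))\<^sup>2 = (norm (g n \<omega> - grad n (m \<omega>)))\<^sup>2"
    using AEc by eventually_elim auto
  have gc_m: "\<And>n. n \<in> K \<Longrightarrow> (\<lambda>\<omega>. (norm (g n \<omega> - cgv n \<omega>))\<^sup>2) \<in> borel_measurable M"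
    using g_meas cgvM by measurable
  have Dn_int: "\<And>n. n \<in> K \<Longrightarrow> integrable M (\<lambda>\<omega>. (norm (g n \<omega> - cgv n \<omega>))\<^sup>2)"
    using integrable_cong_AE[OF gc_m gradm_m AEn] var_int by simp
  have Dn_eq: "\<And>n. n \<in> K \<Longrightarrow> expectation (\<lambda>\<omega>. (norm (g n \<omega> - cgv n \<omega>))\<^sup>2)
      = expectation (\<lambda>\<omega>. (norm (g n \<omega> - grad n (m \<omega>)))\<^sup>2)"
    by (rule integral_cong_AE[OF gc_m gradm_m AEn])
  have D_bound: "\<And>\<omega>. (norm (D \<omega>))\<^sup>2 \<le> (\<Sum>n\<in>K. (p n / S) * (norm (g n \<omega> - cgv n \<omega>))\<^sup>2)"
    unfolding De by (rule norm_sq_convex[OF Kf K_ne w0 w1])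
  have Bint: "integrable M (\<lambda>\<omega>. \<Sum>n\<in>K. (p n / S) * (norm (g n \<omega> - cgv n \<omega>))\<^sup>2)"
    by (intro Bochner_Integration.integrable_sum integrable_mult_right Dn_int)
  have D2int: "integrable M (\<lambda>\<omega>. (norm (D \<omega>))\<^sup>2)"
  proof (rule Bochner_Integration.integrable_bound[OF Bint])
    show "(\<lambda>\<omega>. (norm (D \<omega>))\<^sup>2) \<in> borel_measurable M" using DM by measurable
    show "AE \<omega> in M. norm ((norm (D \<omega>))\<^sup>2) \<le> norm (\<Sum>n\<in>K. (p n / S) * (norm (g n \<omega> - cgv n \<omega>))\<^sup>2)"
    proof (rule AE_I2)
      fix \<omega>
      let ?B = "\<Sum>n\<in>K. (p n / S) * (norm (g n \<omega> - cgv n \<omega>))\<^sup>2"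
      have b: "(norm (D \<omega>))\<^sup>2 \<le> ?B" by (rule D_bound)
      have "norm ((norm (D \<omega>))\<^sup>2) = (norm (D \<omega>))\<^sup>2" by simp
      moreover have "?B \<le> norm ?B" by (simp only: real_norm_def abs_ge_self)
      ultimately show "norm ((norm (D \<omega>))\<^sup>2) \<le> norm ?B" using b by linarith
    qed
  qed
  have ED2: "expectation (\<lambda>\<omega>. (norm (D \<omega>))\<^sup>2) \<le> vth\<^sup>2"
  proof -
    have "expectation (\<lambda>\<omega>. (norm (D \<omega>))\<^sup>2)
        \<le> expectation (\<lambda>\<omega>. \<Sum>n\<in>K. (p n / S) * (norm (g n \<omega> - cgv n \<omega>))\<^sup>2)"
      by (rule integral_mono[OF D2int Bint D_bound])
    also have "\<dots> = (\<Sum>n\<in>K. expectation (\<lambda>\<omega>. (p n / S) * (norm (g n \<omega> - cgv n \<omega>))\<^sup>2))"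
      by (rule Bochner_Integration.integral_sum) (intro integrable_mult_right Dn_int)
    also have "\<dots> = (\<Sum>n\<in>K. (p n / S) * expectation (\<lambda>\<omega>. (norm (g n \<omega> - cgv n \<omega>))\<^sup>2))"
      by simp
    also have "\<dots> \<le> (\<Sum>n\<in>K. (p n / S) * vth\<^sup>2)"
      by (intro sum_mono mult_left_mono w0) (simp add: Dn_eq var_bound)
    also have "\<dots> = vth\<^sup>2" using w1 sum_distrib_right[of "\<lambda>n. p n / S" K "vth\<^sup>2"] by simp
    finally show ?thesis .
  qed
  have A2int: "integrable M (\<lambda>\<omega>. (norm (A \<omega>))\<^sup>2)"
  proof -
    have i1: "integrable M (\<lambda>\<omega>. 2 * (norm (X \<omega>))\<^sup>2 + 2 * \<tau>\<^sup>2 * (norm (D \<omega>))\<^sup>2)"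
      using X2int D2int by (intro Bochner_Integration.integrable_add integrable_mult_right)
    have i2: "(\<lambda>\<omega>. (norm (A \<omega>))\<^sup>2) \<in> borel_measurable M" using AM by measurable
    have i3: "AE \<omega> in M. norm ((norm (A \<omega>))\<^sup>2) \<le> norm (2 * (norm (X \<omega>))\<^sup>2 + 2 * \<tau>\<^sup>2 * (norm (D \<omega>))\<^sup>2)"
    proof (rule AE_I2)
      fix \<omega>
      have "A \<omega> = X \<omega> + \<tau> *\<^sub>R D \<omega>" using XAD[of \<omega>] by simp
      then have "(norm (A \<omega>))\<^sup>2 \<le> 2 * (norm (X \<omega>))\<^sup>2 + 2 * (norm (\<tau> *\<^sub>R D \<omega>))\<^sup>2"
        using norm_add_sq_le[of "X \<omega>" "\<tau> *\<^sub>R D \<omega>"] by simp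
      also have "(norm (\<tau> *\<^sub>R D \<omega>))\<^sup>2 = \<tau>\<^sup>2 * (norm (D \<omega>))\<^sup>2" by (simp add: power_mult_distrib)
      finally have b: "(norm (A \<omega>))\<^sup>2 \<le> 2 * (norm (X \<omega>))\<^sup>2 + 2 * \<tau>\<^sup>2 * (norm (D \<omega>))\<^sup>2" by simp
      have "norm ((norm (A \<omega>))\<^sup>2) = (norm (A \<omega>))\<^sup>2" by simp
      moreover have "2 * (norm (X \<omega>))\<^sup>2 + 2 * \<tau>\<^sup>2 * (norm (D \<omega>))\<^sup>2 \<le> norm (2 * (norm (X \<omega>))\<^sup>2 + 2 * \<tau>\<^sup>2 * (norm (D \<omega>))\<^sup>2)"
        by (simp only: real_norm_def abs_ge_self)
      ultimately show "norm ((norm (A \<omega>))\<^sup>2) \<le> norm (2 * (norm (X \<omega>))\<^sup>2 + 2 * \<tau>\<^sup>2 * (norm (D \<omega>))\<^sup>2)"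
        using b by linarith
    qed
    show ?thesis by (rule Bochner_Integration.integrable_bound[OF i1 i2 i3])
  qed
  have Ai_int: "\<And>i. integrable M (\<lambda>\<omega>. A \<omega> $ i)"
  proof -
    fix i
    have m1: "(\<lambda>\<omega>. A \<omega> $ i) \<in> borel_measurable M" using AM by measurable
    have "integrable M (\<lambda>\<omega>. (A \<omega> $ i)\<^sup>2)"
      by (rule Bochner_Integration.integrable_bound[OF A2int]) (use AM in \<open>measurable\<close>, simp add: coord_sq_le)
    then show "integrable M (\<lambda>\<omega>. A \<omega> $ i)" by (rule square_integrable_imp_integrable[OF m1])
  qed
  have AG_int: "\<And>n i. n \<in> K \<Longrightarrow> integrable M (\<lambda>\<omega>. A \<omega> $ i * g n \<omega> $ i)"
  proof -
    fix n i assume n: "n \<in> K"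
    have i1: "integrable M (\<lambda>\<omega>. \<bar>G\<bar> * \<bar>A \<omega> $ i\<bar>)"
      by (intro integrable_mult_right integrable_abs Ai_int)
    have i2: "(\<lambda>\<omega>. A \<omega> $ i * g n \<omega> $ i) \<in> borel_measurable M"
      using AM gi_m[OF n] by measurable
    have i3: "AE \<omega> in M. norm (A \<omega> $ i * g n \<omega> $ i) \<le> norm (\<bar>G\<bar> * \<bar>A \<omega> $ i\<bar>)"
    proof (rule AE_I2)
      fix \<omega> assume \<omega>: "\<omega> \<in> space M"
      have "\<bar>g n \<omega> $ i\<bar> \<le> \<bar>G\<bar>" using component_le_norm_cart[of "g n \<omega>" i] g_bound[OF n \<omega>] by simp
      then have "\<bar>A \<omega> $ i\<bar> * \<bar>g n \<omega> $ i\<bar> \<le> \<bar>A \<omega> $ i\<bar> * \<bar>G\<bar>" by (intro mult_left_mono) auto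
      then show "norm (A \<omega> $ i * g n \<omega> $ i) \<le> norm (\<bar>G\<bar> * \<bar>A \<omega> $ i\<bar>)"
        by (simp add: abs_mult mult.commute)
    qed
    show "integrable M (\<lambda>\<omega>. A \<omega> $ i * g n \<omega> $ i)"
      by (rule Bochner_Integration.integrable_bound[OF i1 i2 i3])
  qed
  have AC: "\<And>n i. n \<in> K \<Longrightarrow> integrable M (\<lambda>\<omega>. A \<omega> $ i * cg n i \<omega>) \<and>
      expectation (\<lambda>\<omega>. A \<omega> $ i * cg n i \<omega>) = expectation (\<lambda>\<omega>. A \<omega> $ i * g n \<omega> $ i)"
    using FS.real_cond_exp_intg[OF AG_int AF gi_m] unfolding cg_def by blast
  have ADe: "\<And>\<omega>. A \<omega> \<bullet> D \<omega> = (\<Sum>i\<in>UNIV. \<Sum>n\<in>K. (p n / S) * (A \<omega> $ i * g n \<omega> $ i - A \<omega> $ i * cg n i \<omega>))"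
    unfolding inner_vec_def Di_eq
    by (intro sum.cong refl) (simp add: sum_distrib_left algebra_simps)
  have ADt: "\<And>n i. n \<in> K \<Longrightarrow> integrable M (\<lambda>\<omega>. (p n / S) * (A \<omega> $ i * g n \<omega> $ i - A \<omega> $ i * cg n i \<omega>))
       \<and> expectation (\<lambda>\<omega>. (p n / S) * (A \<omega> $ i * g n \<omega> $ i - A \<omega> $ i * cg n i \<omega>)) = 0"
    using AG_int AC by simp
  have ADint: "integrable M (\<lambda>\<omega>. A \<omega> \<bullet> D \<omega>)"
    unfolding ADe using ADt by (intro Bochner_Integration.integrable_sum) blast
  have AD0: "expectation (\<lambda>\<omega>. A \<omega> \<bullet> D \<omega>) = 0"
  proof -
    have "expectation (\<lambda>\<omega>. A \<omega> \<bullet> D \<omega>) = (\<Sum>i\<in>UNIV. expectation (\<lambda>\<omega>. \<Sum>n\<in>K. (p n / S) * (A \<omega> $ i * g n \<omega> $ i - A \<omega> $ i * cg n i \<omega>)))"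
      unfolding ADe using ADt by (intro Bochner_Integration.integral_sum Bochner_Integration.integrable_sum) blast
    also have "\<dots> = (\<Sum>i\<in>(UNIV::'d set). \<Sum>n\<in>K. expectation (\<lambda>\<omega>. (p n / S) * (A \<omega> $ i * g n \<omega> $ i - A \<omega> $ i * cg n i \<omega>)))"
      using ADt by (intro sum.cong refl Bochner_Integration.integral_sum) blast
    also have "\<dots> = 0"
    proof (intro sum.neutral ballI)
      fix i n assume "n \<in> K"
      then show "expectation (\<lambda>\<omega>. (p n / S) * (A \<omega> $ i * g n \<omega> $ i - A \<omega> $ i * cg n i \<omega>)) = 0"
        using ADt by blast
    qed
    finally show ?thesis .
  qed
  have EX2: "expectation (\<lambda>\<omega>. (norm (X \<omega>))\<^sup>2) = expectation (\<lambda>\<omega>. (norm (A \<omega>))\<^sup>2) + \<tau>\<^sup>2 * expectation (\<lambda>\<omega>. (norm (D \<omega>))\<^sup>2)"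
  proof -
    have pw: "\<And>\<omega>. (norm (X \<omega>))\<^sup>2 = (norm (A \<omega>))\<^sup>2 - 2 * \<tau> * (A \<omega> \<bullet> D \<omega>) + \<tau>\<^sup>2 * (norm (D \<omega>))\<^sup>2"
      unfolding XAD power2_norm_eq_inner
      by (simp add: inner_diff_left inner_diff_right inner_commute algebra_simps power2_eq_square)
    show ?thesis unfolding pw using A2int ADint D2int AD0 by simp
  qed
  have EA2: "expectation (\<lambda>\<omega>. (norm (A \<omega>))\<^sup>2) \<le> (1 - \<rho> * \<tau>) * Em + 2 * \<tau>\<^sup>2 * vrho * Gam"
  proof -
    have ae: "AE \<omega> in M. (norm (A \<omega>))\<^sup>2 \<le> (1 - \<rho> * \<tau>) * (norm (m \<omega> - mstar))\<^sup>2 + 2 * \<tau>\<^sup>2 * vrho * Gam"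
      using AEc
    proof eventually_elim
      case (elim \<omega>)
      then have "A \<omega> = m \<omega> - mstar - \<tau> *\<^sub>R (\<Sum>n\<in>K. (p n / S) *\<^sub>R grad n (m \<omega>))"
        unfolding A_def gb_def by (simp cong: sum.cong)
      then show ?case unfolding Gam_def
        by (simp only:) (rule det_main[OF Kf K_ne K_sub w0 w1 mloc_min smooth strconv \<theta>_pos vrho_pos \<tau>_lo \<tau>_hi])
    qed
    have "expectation (\<lambda>\<omega>. (norm (A \<omega>))\<^sup>2)
        \<le> expectation (\<lambda>\<omega>. (1 - \<rho> * \<tau>) * (norm (m \<omega> - mstar))\<^sup>2 + 2 * \<tau>\<^sup>2 * vrho * Gam)"
      by (rule integral_mono_AE[OF A2int _ ae]) (use m_L2 in simp)
    also have "\<dots> = (1 - \<rho> * \<tau>) * Em + 2 * \<tau>\<^sup>2 * vrho * Gam"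
      unfolding Em_def using m_L2 prob_space by simp
    finally show ?thesis .
  qed
  define SJ where "SJ = (\<Sum>n\<in>J. (p n)\<^sup>2)"
  have SJ0: "SJ \<ge> 0" unfolding SJ_def by (intro sum_nonneg) simp
  have Psi_eq: "Psi N CARD('d) \<sigma>B J K p = (real N * SJ + real CARD('d) * \<sigma>B) / S\<^sup>2"
    unfolding Psi_def SJ_def S_def by simp
  have noise_le: "c\<^sup>2 * (SJ + real CARD('d) * \<sigma>B) \<le> \<tau>\<^sup>2 * (G\<^sup>2 * Psi N CARD('d) \<sigma>B J K p)"
  proof -
    have "SJ + real CARD('d) * \<sigma>B \<le> real N * SJ + real CARD('d) * \<sigma>B"
      using N1 SJ0 by (simp add: mult_le_cancel_right1)
    then have "(SJ + real CARD('d) * \<sigma>B) / S\<^sup>2 \<le> (real N * SJ + real CARD('d) * \<sigma>B) / S\<^sup>2"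
      using Spos by (simp add: divide_right_mono)
    then have "(\<tau> * G)\<^sup>2 * ((SJ + real CARD('d) * \<sigma>B) / S\<^sup>2) \<le> (\<tau> * G)\<^sup>2 * ((real N * SJ + real CARD('d) * \<sigma>B) / S\<^sup>2)"
      by (intro mult_left_mono) auto
    then show ?thesis unfolding Psi_eq c_def by (simp add: power_mult_distrib power_divide algebra_simps)
  qed
  have FIN: "expectation (\<lambda>\<omega>. (norm (mnext \<omega> - mstar))\<^sup>2)
      \<le> (1 - \<rho> * \<tau>) * Em + \<tau>\<^sup>2 * (2 * vrho * Gam + vth\<^sup>2 + G\<^sup>2 * Psi N CARD('d) \<sigma>B J K p)"
  proof -
    have "expectation (\<lambda>\<omega>. (norm (mnext \<omega> - mstar))\<^sup>2)
        = expectation (\<lambda>\<omega>. (norm (A \<omega>))\<^sup>2) + \<tau>\<^sup>2 * expectation (\<lambda>\<omega>. (norm (D \<omega>))\<^sup>2) + c\<^sup>2 * (SJ + real CARD('d) * \<sigma>B)"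
      unfolding Emn EX2 SJ_def by simp
    also have "\<dots> \<le> ((1 - \<rho> * \<tau>) * Em + 2 * \<tau>\<^sup>2 * vrho * Gam) + \<tau>\<^sup>2 * vth\<^sup>2 + \<tau>\<^sup>2 * (G\<^sup>2 * Psi N CARD('d) \<sigma>B J K p)"
      by (intro add_mono EA2 mult_left_mono ED2 noise_le) simp
    also have "\<dots> = (1 - \<rho> * \<tau>) * Em + \<tau>\<^sup>2 * (2 * vrho * Gam + vth\<^sup>2 + G\<^sup>2 * Psi N CARD('d) \<sigma>B J K p)"
      by (simp add: algebra_simps)
    finally show ?thesis .
  qed
  show ?thesis
    using FIN unfolding Let_def mnext_def ghat_def rtot_def S_def p_def Em_def Gam_def .
qed

end
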